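(* Let $K\subset\mathbb{R}^n$ be a proper cone and let $A\in\mathbb{R}^{n\times n}$ be exponentially $K$-nonnegative, i.e. $e^{At}K\subset K$ for all $t\ge 0$. The following are equivalent: (i) $A$ has no eigenvector in $\partial K$; (ii) $e^{At}$ is $K$-irreducible for all $t\ge 0$ with the possible exception of a discrete set of times; (iii) there exists $t>0$ such that $e^{At}$ is $K$-irreducible; (iv) there does not exist a nontrivial face $F$ of $K$ such that the linear span $H_F$ of $F$ is $A$-invariant (i.e. $AH_F\subset H_F$).
   Context: A proper cone $K\subset\mathbb{R}^n$ is a nonempty set with $rK\subset K$ for all $r>0$ which is convex, pointed ($K\cap(-K)=\{0\}$), closed and has nonempty interior; $\partial K$ denotes its boundary. Write $x\ge_K y$ if $x-y\in K$. A face of $K$ is a cone $F\subseteq K$ such that $x\in F$ and $x\ge_K y\ge_K 0$ imply $y\in F$; the faces $\{0\}$ and $K$ are called trivial. $\pi(K)=\{A\in\mathbb{R}^{n\times n}: AK\subset K\}$. A matrix $A\in\pi(K)$ is $K$-irreducible if there is no nontrivial face $F$ of $K$ with $AF\subset F$. *)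

theory Defs
  imports "HOL-Analysis.Analysis"
begin

primrec matpow :: "real^'n^'n \<Rightarrow> nat \<Rightarrow> real^'n^'n" where
  "matpow A 0 = mat 1"
| "matpow A (Suc k) = A ** matpow A k"

definition mexp :: "real^'n^'n \<Rightarrow> real^'n^'n" where
  "mexp A = (\<Sum>k. (1 / fact k) *\<^sub>R matpow A k)"

definition is_cone :: "(real^'n) set \<Rightarrow> bool" where
  "is_cone K \<longleftrightarrow> K \<noteq> {} \<and> (\<forall>r>0. \<forall>x\<in>K. r *\<^sub>R x \<in> K)"

definition proper_cone :: "(real^'n) set \<Rightarrow> bool" where
  "proper_cone K \<longleftrightarrow> is_cone K \<and> convex K \<and> K \<inter> uminus ` K = {0}
     \<and> closed K \<and> interior K \<noteq> {}"

text \<open>Faces: convex subcones F of K with: x in F, x >=_K y >=_K 0 implies y in F.\<close>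
definition face :: "(real^'n) set \<Rightarrow> (real^'n) set \<Rightarrow> bool" where
  "face K F \<longleftrightarrow> is_cone F \<and> convex F \<and> F \<subseteq> K
     \<and> (\<forall>x y. x \<in> F \<and> x - y \<in> K \<and> y - 0 \<in> K \<longrightarrow> y \<in> F)"

definition nontrivial_face :: "(real^'n) set \<Rightarrow> (real^'n) set \<Rightarrow> bool" where
  "nontrivial_face K F \<longleftrightarrow> face K F \<and> F \<noteq> {0} \<and> F \<noteq> K"

definition cone_preserving :: "(real^'n) set \<Rightarrow> real^'n^'n \<Rightarrow> bool" where
  "cone_preserving K A \<longleftrightarrow> (\<forall>x\<in>K. A *v x \<in> K)"

definition K_irreducible :: "(real^'n) set \<Rightarrow> real^'n^'n \<Rightarrow> bool" where
  "K_irreducible K A \<longleftrightarrow> cone_preserving K A \<and>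
     \<not> (\<exists>F. nontrivial_face K F \<and> (\<forall>x\<in>F. A *v x \<in> F))"

definition exp_K_nonneg :: "(real^'n) set \<Rightarrow> real^'n^'n \<Rightarrow> bool" where
  "exp_K_nonneg K A \<longleftrightarrow> (\<forall>t\<ge>0. cone_preserving K (mexp (t *\<^sub>R A)))"

end

theory Submission
  imports Defs "HOL-Computational_Algebra.Polynomial" "HOL-Computational_Algebra.Fundamental_Theorem_Algebra"
begin

lemma matpow_mv: "matpow M k *v v = ((*v) M ^^ k) v"
  by (induction k arbitrary: v) (auto simp: matrix_vector_mul_assoc[symmetric])

lemma matpow_scale: "matpow (t *\<^sub>R M) k = t ^ k *\<^sub>R matpow M k"
  by (induction k) (auto simp: scalar_matrix_assoc[symmetric] matrix_scalar_ac)

lemma matpow_comm: "M ** matpow M k = matpow M k ** M"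
  by (induction k) (auto simp: matrix_mul_assoc)

lemma norm_mv_le: fixes M :: "real^'n^'m" shows "norm (M *v v) \<le> onorm ((*v) M) * norm v"
  by (rule onorm[OF matrix_vector_mul_bounded_linear])

lemma norm_matpow_mv_le: fixes M :: "real^'n^'n" shows "norm (matpow M k *v v) \<le> onorm ((*v) M) ^ k * norm v"
proof (induction k)
  case 0 then show ?case by simp
next
  case (Suc k)
  have "norm (matpow M (Suc k) *v v) = norm (M *v (matpow M k *v v))"
    by (simp add: matrix_vector_mul_assoc)
  also have "\<dots> \<le> onorm ((*v) M) * norm (matpow M k *v v)" by (rule norm_mv_le)
  also have "\<dots> \<le> onorm ((*v) M) * (onorm ((*v) M) ^ k * norm v)"
    using Suc by (intro mult_left_mono) (auto intro: onorm_pos_le)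
  finally show ?case by (simp add: mult.assoc)
qed

lemma norm_matrix_le_entries:
  fixes M :: "real^'n^'n"
  assumes "\<And>i j. \<bar>M $ i $ j\<bar> \<le> c"
  shows "norm M \<le> real CARD('n) * real CARD('n) * c"
proof -
  have "norm M \<le> (\<Sum>i\<in>UNIV. norm (M $ i))" 
    by (simp add: norm_vec_def L2_set_le_sum)
  also have "\<dots> \<le> (\<Sum>i\<in>(UNIV::'n set). real CARD('n) * c)"
  proof (rule sum_mono)
    fix i
    have "norm (M $ i) \<le> (\<Sum>j\<in>UNIV. \<bar>M $ i $ j\<bar>)" by (rule norm_le_l1_cart)
    also have "\<dots> \<le> (\<Sum>j\<in>(UNIV::'n set). c)" by (intro sum_mono assms)
    finally show "norm (M $ i) \<le> real CARD('n) * c" by simp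
  qed
  finally show ?thesis by simp
qed

lemma matrix_entry_le:
  fixes M :: "real^'n^'n"
  shows "\<bar>matpow M k $ i $ j\<bar> \<le> onorm ((*v) M) ^ k"
proof -
  have "matpow M k $ i $ j = (matpow M k *v axis j 1) $ i"
    by (simp add: matrix_vector_mult_basis column_def)
  also have "\<bar>\<dots>\<bar> \<le> norm (matpow M k *v axis j 1)" by (rule component_le_norm_cart)
  also have "\<dots> \<le> onorm ((*v) M) ^ k" using norm_matpow_mv_le[of M k "axis j 1"] by simp
  finally show ?thesis .
qed

lemma summable_mexp: 
  fixes M :: "real^'n^'n"
  shows "summable (\<lambda>k. (1 / fact k) *\<^sub>R matpow M k)"
proof (rule summable_comparison_test)
  let ?c = "onorm ((*v) M)"
  show "\<exists>N. \<forall>n\<ge>N. norm ((1 / fact n) *\<^sub>R matpow M n) \<le> real CARD('n) * real CARD('n) * (?c ^ n /\<^sub>R fact n)"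
  proof (intro exI allI impI)
    fix n
    have "norm (matpow M n) \<le> real CARD('n) * real CARD('n) * ?c ^ n"
      by (rule norm_matrix_le_entries) (rule matrix_entry_le)
    then show "norm ((1 / fact n) *\<^sub>R matpow M n) \<le> real CARD('n) * real CARD('n) * (?c ^ n /\<^sub>R fact n)"
      by (simp add: divide_simps mult_ac)
  qed
  show "summable (\<lambda>n. real CARD('n) * real CARD('n) * (?c ^ n /\<^sub>R fact n))"
    by (intro summable_mult sums_summable[OF exp_converges])
qed

lemma bounded_linear_mv_left: "bounded_linear (\<lambda>X::real^'n^'m. X *v v)"
  apply (subst linear_conv_bounded_linear[symmetric])
  by (auto simp: linear_iff matrix_vector_mult_add_rdistrib scaleR_matrix_vector_assoc)

lemma mexp_apply_sums:
  fixes M :: "real^'n^'n"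
  shows "(\<lambda>k. (1 / fact k) *\<^sub>R (matpow M k *v v)) sums (mexp M *v v)"
proof -
  have "(\<lambda>k. (1 / fact k) *\<^sub>R matpow M k) sums mexp M"
    unfolding mexp_def by (rule summable_sums[OF summable_mexp])
  from bounded_linear.sums[OF bounded_linear_mv_left this, of v]
  show ?thesis by (simp add: scaleR_matrix_vector_assoc)
qed

lemma mexp_t_sums:
  fixes A :: "real^'n^'n"
  shows "(\<lambda>k. (t ^ k / fact k) *\<^sub>R (matpow A k *v v)) sums (mexp (t *\<^sub>R A) *v v)"
  using mexp_apply_sums[of "t *\<^sub>R A" v]
  by (simp add: matpow_scale scaleR_matrix_vector_assoc[symmetric])


lemma matpow_comm_gen: assumes "A ** M = M ** A" shows "A ** matpow M k = matpow M k ** A"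
proof (induction k)
  case (Suc k)
  have "A ** matpow M (Suc k) = (A ** M) ** matpow M k" by (simp add: matrix_mul_assoc)
  also have "\<dots> = M ** (A ** matpow M k)" by (simp add: assms matrix_mul_assoc)
  also have "\<dots> = M ** (matpow M k ** A)" by (simp add: Suc)
  finally show ?case by (simp add: matrix_mul_assoc)
qed simp

lemma mexp_comm_vec:
  fixes A M :: "real^'n^'n"
  assumes "A ** M = M ** A"
  shows "A *v (mexp M *v v) = mexp M *v (A *v v)"
proof -
  have s1: "(\<lambda>k. A *v ((1 / fact k) *\<^sub>R (matpow M k *v v))) sums (A *v (mexp M *v v))"
    by (rule bounded_linear.sums[OF matrix_vector_mul_bounded_linear mexp_apply_sums])
  have s2: "(\<lambda>k. (1 / fact k) *\<^sub>R (matpow M k *v (A *v v))) sums (mexp M *v (A *v v))"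
    by (rule mexp_apply_sums)
  have eq: "(\<lambda>k. A *v ((1 / fact k) *\<^sub>R (matpow M k *v v))) = (\<lambda>k. (1 / fact k) *\<^sub>R (matpow M k *v (A *v v)))"
  proof
    fix k
    have "A *v (matpow M k *v v) = matpow M k *v (A *v v)"
      by (simp add: matrix_vector_mul_assoc matpow_comm_gen[OF assms])
    then show "A *v ((1 / fact k) *\<^sub>R (matpow M k *v v)) = (1 / fact k) *\<^sub>R (matpow M k *v (A *v v))"
      by (simp add: matrix_vector_mult_scaleR)
  qed
  show ?thesis using sums_unique2[OF s1[unfolded eq] s2] .
qed

lemma mexp_comm_A:
  fixes A :: "real^'n^'n"
  shows "A *v (mexp (t *\<^sub>R A) *v v) = mexp (t *\<^sub>R A) *v (A *v v)"
  by (rule mexp_comm_vec) (simp add: matrix_scalar_ac scalar_matrix_assoc[symmetric])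

lemma mexp_eigen:
  fixes A :: "real^'n^'n"
  assumes "A *v x = \<mu> *\<^sub>R x"
  shows "mexp (t *\<^sub>R A) *v x = exp (t * \<mu>) *\<^sub>R x"
proof -
  have pw: "matpow A k *v x = \<mu> ^ k *\<^sub>R x" for k
    by (induction k) (auto simp: matrix_vector_mul_assoc[symmetric] assms matrix_vector_mult_scaleR)
  have s: "(\<lambda>k. ((t * \<mu>) ^ k /\<^sub>R fact k) *\<^sub>R x) sums (exp (t * \<mu>) *\<^sub>R x)"
    by (rule bounded_linear.sums[OF bounded_linear_scaleR_left exp_converges])
  have e: "(\<lambda>k. ((t * \<mu>) ^ k /\<^sub>R fact k) *\<^sub>R x) = (\<lambda>k. (t ^ k / fact k) *\<^sub>R (matpow A k *v x))"
    by (simp add: fun_eq_iff pw scaleR_scaleR power_mult_distrib divide_inverse mult_ac)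
  show ?thesis using sums_unique2[OF mexp_t_sums s[unfolded e]] .
qed

lemma sums_in_closed_subspace:
  assumes "closed S" "subspace S" "\<And>k. f k \<in> S" "f sums l"
  shows "l \<in> S"
proof -
  have lim: "(\<lambda>n. sum f {..<n}) \<longlonglongrightarrow> l" using assms(4) by (simp add: sums_def)
  have ev: "\<forall>\<^sub>F n in sequentially. sum f {..<n} \<in> S"
    using assms(2,3) by (simp add: subspace_sum)
  show ?thesis by (rule Lim_in_closed_set[OF assms(1) ev trivial_limit_sequentially lim])
qed

lemma mexp_subspace:
  fixes A :: "real^'n^'n"
  assumes "subspace S" "\<And>y. y \<in> S \<Longrightarrow> A *v y \<in> S" "x \<in> S"
  shows "mexp (t *\<^sub>R A) *v x \<in> S"
proof (rule sums_in_closed_subspace[OF closed_subspace[OF assms(1)] assms(1) _ mexp_t_sums])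
  fix k
  have "matpow A k *v x \<in> S"
    by (induction k) (auto simp: assms matrix_vector_mul_assoc[symmetric])
  then show "(t ^ k / fact k) *\<^sub>R (matpow A k *v x) \<in> S"
    using assms(1) by (simp add: subspace_scale)
qed

lemma mexp_deriv0:
  fixes A :: "real^'n^'n"
  shows "((\<lambda>t. (1 / t) *\<^sub>R (mexp (t *\<^sub>R A) *v y - y)) \<longlongrightarrow> A *v y) (at_right 0)"
proof -
  let ?c = "onorm ((*v) A)"
  have c0: "?c \<ge> 0" by (rule onorm_pos_le) simp
  have bound: "norm ((1 / t) *\<^sub>R (mexp (t *\<^sub>R A) *v y - y) - A *v y) \<le> t * (exp ?c * norm y)"
    if t: "0 < t" "t \<le> 1" for t
  proof -
    define g where "g k = (if k < 2 then 0 else (t ^ k / fact k) *\<^sub>R (matpow A k *v y))" for k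
    have s: "(\<lambda>k. (t ^ k / fact k) *\<^sub>R (matpow A k *v y)) sums (mexp (t *\<^sub>R A) *v y)"
      by (rule mexp_t_sums)
    have h: "(\<lambda>k. (t ^ k / fact k) *\<^sub>R (matpow A k *v y)) = (\<lambda>k. g k + (if k = 0 then y else if k = 1 then t *\<^sub>R (A *v y) else 0))"
    proof (rule ext)
      fix k :: nat
      show "(t ^ k / fact k) *\<^sub>R (matpow A k *v y) = g k + (if k = 0 then y else if k = 1 then t *\<^sub>R (A *v y) else 0)"
        by (cases "k = 0"; cases "k = 1") (auto simp: g_def)
    qed
    have s2: "(\<lambda>k. (if k = 0 then y else if k = 1 then t *\<^sub>R (A *v y) else 0)) sums (y + t *\<^sub>R (A *v y))"
    proof -
      have "(\<lambda>k. (if k = 0 then y else if k = 1 then t *\<^sub>R (A *v y) else 0)) sums (\<Sum>k<(2::nat). (if k = 0 then y else if k = 1 then t *\<^sub>R (A *v y) else 0))"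
        by (rule sums_finite) auto
      also have "(\<Sum>k<(2::nat). (if k = 0 then y else if k = 1 then t *\<^sub>R (A *v y) else 0)) = y + t *\<^sub>R (A *v y)"
        by (simp add: numeral_2_eq_2)
      finally show ?thesis .
    qed
    have gs: "g sums (mexp (t *\<^sub>R A) *v y - (y + t *\<^sub>R (A *v y)))"
      using sums_diff[OF s[unfolded h] s2] by simp
    have gb: "norm (g k) \<le> t\<^sup>2 * (?c ^ k /\<^sub>R fact k * norm y)" for k
    proof (cases "k < 2")
      case True then show ?thesis using c0 by (simp add: g_def)
    next
      case False
      have "norm (g k) = t ^ k / fact k * norm (matpow A k *v y)" using t by (simp add: g_def False)
      also have "\<dots> \<le> t ^ k / fact k * (?c ^ k * norm y)"
        using t by (intro mult_left_mono norm_matpow_mv_le) auto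
      also have "t ^ k \<le> t\<^sup>2" using t False by (intro power_decreasing) auto
      hence "t ^ k / fact k * (?c ^ k * norm y) \<le> t\<^sup>2 / fact k * (?c ^ k * norm y)"
        using c0 by (intro mult_right_mono divide_right_mono) auto
      finally show ?thesis by (simp add: divide_simps)
    qed
    have sumb: "summable (\<lambda>k. t\<^sup>2 * (?c ^ k /\<^sub>R fact k * norm y))"
      by (intro summable_mult summable_mult2 sums_summable[OF exp_converges])
    have sumg: "summable (\<lambda>k. norm (g k))"
      by (rule summable_comparison_test'[OF sumb]) (use gb in auto)
    have "norm (mexp (t *\<^sub>R A) *v y - (y + t *\<^sub>R (A *v y))) = norm (suminf g)"
      using gs by (simp add: sums_iff)
    also have "\<dots> \<le> (\<Sum>k. norm (g k))" by (rule summable_norm[OF sumg])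
    also have "\<dots> \<le> (\<Sum>k. t\<^sup>2 * (?c ^ k /\<^sub>R fact k * norm y))"
      by (rule suminf_le[OF gb sumg sumb])
    also have "\<dots> = t\<^sup>2 * (exp ?c * norm y)"
      using sums_unique[OF sums_mult[OF sums_mult2[OF exp_converges[of ?c], of "norm y"], of "t\<^sup>2"]]
      by simp
    finally have *: "norm (mexp (t *\<^sub>R A) *v y - y - t *\<^sub>R (A *v y)) \<le> t\<^sup>2 * (exp ?c * norm y)"
      by (simp add: algebra_simps)
    have "(1 / t) *\<^sub>R (mexp (t *\<^sub>R A) *v y - y) - A *v y = (1/t) *\<^sub>R (mexp (t *\<^sub>R A) *v y - y - t *\<^sub>R (A *v y))"
      using t by (simp add: algebra_simps)
    hence "norm ((1 / t) *\<^sub>R (mexp (t *\<^sub>R A) *v y - y) - A *v y) = (1/t) * norm (mexp (t *\<^sub>R A) *v y - y - t *\<^sub>R (A *v y))"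
      using t by simp
    also have "\<dots> \<le> (1/t) * (t\<^sup>2 * (exp ?c * norm y))"
      using * t by (intro mult_left_mono) auto
    also have "\<dots> = t * (exp ?c * norm y)" using t by (simp add: power2_eq_square)
    finally show ?thesis .
  qed
  have ev: "\<forall>\<^sub>F t in at_right 0. norm ((1 / t) *\<^sub>R (mexp (t *\<^sub>R A) *v y - y) - A *v y) \<le> t * (exp ?c * norm y)"
    unfolding eventually_at_right_field
    by (intro exI[of _ 1]) (auto intro: bound)
  have "((\<lambda>t. t * (exp ?c * norm y)) \<longlongrightarrow> 0 * (exp ?c * norm y)) (at_right 0)"
    by (intro tendsto_intros)
  hence "((\<lambda>t. (1 / t) *\<^sub>R (mexp (t *\<^sub>R A) *v y - y) - A *v y) \<longlongrightarrow> 0) (at_right 0)"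
    using Lim_null_comparison[OF ev] by simp
  then show ?thesis by (simp add: Lim_null[symmetric])
qed


lemma cone_zero:
  assumes "is_cone C" "closed C" shows "0 \<in> C"
proof -
  obtain x where x: "x \<in> C" using assms(1) unfolding is_cone_def by auto
  have lim: "((\<lambda>r. r *\<^sub>R x) \<longlongrightarrow> 0 *\<^sub>R x) (at_right (0::real))"
    by (intro tendsto_intros)
  have ev: "\<forall>\<^sub>F r in at_right (0::real). r *\<^sub>R x \<in> C"
    using assms(1) x unfolding is_cone_def eventually_at_right_field by (intro exI[of _ 1]) auto
  show ?thesis using Lim_in_closed_set[OF assms(2) ev trivial_limit_at_right_real lim] by simp
qed

lemma cone_add:
  assumes "is_cone C" "convex C" "x \<in> C" "y \<in> C" shows "x + y \<in> C"
proof -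
  have "(1/2) *\<^sub>R x + (1/2) *\<^sub>R y \<in> C" using assms(2-4) by (rule convexD) auto
  hence "2 *\<^sub>R ((1/2) *\<^sub>R x + (1/2) *\<^sub>R y) \<in> C" using assms(1) unfolding is_cone_def by auto
  thus ?thesis by (simp add: scaleR_add_right)
qed

lemma cone_scale:
  assumes "is_cone C" "0 \<in> C" "r \<ge> 0" "x \<in> C" shows "r *\<^sub>R x \<in> C"
  using assms unfolding is_cone_def by (cases "r = 0") auto

lemma pc_zero: "proper_cone K \<Longrightarrow> 0 \<in> K"
  unfolding proper_cone_def using cone_zero by blast

lemma pc_add: "proper_cone K \<Longrightarrow> x \<in> K \<Longrightarrow> y \<in> K \<Longrightarrow> x + y \<in> K"
  unfolding proper_cone_def using cone_add by blast

lemma pc_scale: "proper_cone K \<Longrightarrow> r \<ge> 0 \<Longrightarrow> x \<in> K \<Longrightarrow> r *\<^sub>R x \<in> K"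
  using cone_scale pc_zero unfolding proper_cone_def by blast

lemma pc_pointed: "proper_cone K \<Longrightarrow> x \<in> K \<Longrightarrow> -x \<in> K \<Longrightarrow> x = 0"
  unfolding proper_cone_def by (metis (no_types, lifting) IntI image_eqI minus_minus singletonD)

lemma face_zero: assumes "proper_cone K" "face K F" shows "0 \<in> F"
proof -
  obtain x where x: "x \<in> F" using assms(2) unfolding face_def is_cone_def by auto
  have "x \<in> K" using x assms(2) unfolding face_def by auto
  then show ?thesis using assms(2) pc_zero[OF assms(1)] x unfolding face_def by auto
qed

lemma face_add: "face K F \<Longrightarrow> x \<in> F \<Longrightarrow> y \<in> F \<Longrightarrow> x + y \<in> F"
  unfolding face_def using cone_add by blast

lemma face_scale: "proper_cone K \<Longrightarrow> face K F \<Longrightarrow> r \<ge> 0 \<Longrightarrow> x \<in> F \<Longrightarrow> r *\<^sub>R x \<in> F"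
  using cone_scale face_zero unfolding face_def by blast

lemma span_face:
  assumes "proper_cone K" "face K F" "z \<in> span F"
  shows "\<exists>a b. a \<in> F \<and> b \<in> F \<and> z = a - b"
proof -
  let ?D = "{a - b |a b. a \<in> F \<and> b \<in> F}"
  have "subspace ?D"
  proof (rule subspaceI)
    show "0 \<in> ?D" using face_zero[OF assms(1,2)] by force
  next
    fix x y assume "x \<in> ?D" "y \<in> ?D"
    then obtain a b c d where "a \<in> F" "b \<in> F" "c \<in> F" "d \<in> F" "x = a - b" "y = c - d" by auto
    then show "x + y \<in> ?D"
      by (intro CollectI exI[of _ "a + c"] exI[of _ "b + d"]) (auto intro: face_add[OF assms(2)])
  next
    fix r :: real and x assume "x \<in> ?D"
    then obtain a b where ab: "a \<in> F" "b \<in> F" "x = a - b" by auto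
    show "r *\<^sub>R x \<in> ?D"
    proof (cases "r \<ge> 0")
      case True then show ?thesis using ab
        by (intro CollectI exI[of _ "r *\<^sub>R a"] exI[of _ "r *\<^sub>R b"])
           (auto intro: face_scale[OF assms(1,2)] simp: scaleR_diff_right)
    next
      case False
      have "r *\<^sub>R x = (-r) *\<^sub>R b - (-r) *\<^sub>R a" using ab by (simp add: scaleR_diff_right)
      moreover have "(-r) *\<^sub>R b \<in> F" "(-r) *\<^sub>R a \<in> F" using False ab face_scale[OF assms(1,2), of "-r"] by auto
      ultimately show ?thesis by blast
    qed
  qed
  moreover have "F \<subseteq> ?D" using face_zero[OF assms(1,2)] by force
  ultimately have "span F \<subseteq> ?D" by (rule span_minimal[rotated])
  thus ?thesis using assms(3) by blast
qed

lemma face_span_inter: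
  assumes "proper_cone K" "face K F" "y \<in> K" "y \<in> span F"
  shows "y \<in> F"
proof -
  obtain a b where ab: "a \<in> F" "b \<in> F" "y = a - b" using span_face[OF assms(1,2,4)] by auto
  have "b \<in> K" using ab assms(2) unfolding face_def by auto
  then have "a - y \<in> K" using ab by simp
  moreover have R: "\<forall>x y. x \<in> F \<and> x - y \<in> K \<and> y - 0 \<in> K \<longrightarrow> y \<in> F" using assms(2) unfolding face_def by auto
  ultimately show ?thesis using R[rule_format, of a y] ab assms(3) by simp
qed

lemma face_interior_eq:
  assumes "proper_cone K" "face K F" "z \<in> F" "z \<in> interior K"
  shows "F = K"
proof
  show "F \<subseteq> K" using assms(2) unfolding face_def by auto
next
  show "K \<subseteq> F"
  proof
    fix y assume y: "y \<in> K"
    obtain e where e: "e > 0" "ball z e \<subseteq> K" using assms(4) mem_interior by blast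
    define d where "d = e / (2 * (norm y + 1))"
    have "2 * (norm y + 1) > 0" by (smt (verit) norm_ge_zero)
    hence d: "d > 0" using e by (simp add: d_def)
    have "norm (d *\<^sub>R y) < e"
    proof -
      have "norm (d *\<^sub>R y) = d * norm y" using d by simp
      also have "\<dots> < e"
      proof -
        have "d * norm y = e * (norm y / (2 * (norm y + 1)))" by (simp add: d_def)
        also have "norm y / (2 * (norm y + 1)) < 1" by (simp add: divide_less_eq) (smt (verit) norm_ge_zero)
        hence "e * (norm y / (2 * (norm y + 1))) < e * 1" using e(1) by (intro mult_strict_left_mono)
        finally show ?thesis by simp
      qed
      finally show ?thesis .
    qed
    hence "z - d *\<^sub>R y \<in> K" using e(2) by (auto simp: dist_norm)
    moreover have "d *\<^sub>R y \<in> K" using pc_scale[OF assms(1)] d y by auto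
    ultimately have "d *\<^sub>R y \<in> F" using assms(2,3) unfolding face_def by auto
    hence "(1/d) *\<^sub>R (d *\<^sub>R y) \<in> F" using face_scale[OF assms(1,2), of "1/d" "d *\<^sub>R y"] d by auto
    thus "y \<in> F" using d by simp
  qed
qed

lemma nontrivial_face_frontier:
  assumes "proper_cone K" "nontrivial_face K F"
  shows "F \<subseteq> frontier K"
proof
  fix z assume z: "z \<in> F"
  have "z \<in> K" using z assms(2) unfolding nontrivial_face_def face_def by auto
  moreover have "z \<notin> interior K"
    using face_interior_eq[OF assms(1) _ z] assms(2) unfolding nontrivial_face_def by auto
  ultimately show "z \<in> frontier K" unfolding frontier_def using closure_subset by auto
qed


lemma pf_cone:
  fixes M :: "real^'n^'n" and C :: "(real^'n) set"
  assumes cl: "closed C" and cv: "convex C" and cn: "is_cone C"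
    and pt: "\<And>x. x \<in> C \<Longrightarrow> -x \<in> C \<Longrightarrow> x = 0"
    and z0: "z0 \<in> C" "z0 \<noteq> 0"
    and inv: "\<And>x. x \<in> C \<Longrightarrow> M *v x \<in> C"
  shows "\<exists>x\<in>C. x \<noteq> 0 \<and> (\<exists>\<rho>. M *v x = \<rho> *\<^sub>R x)"
proof -
  have C0: "0 \<in> C" by (rule cone_zero[OF cn cl])
  let ?S = "C \<inter> cball 0 1"
  let ?L = "onorm ((*v) M) + norm z0"
  have step: "\<exists>y lm. y \<in> C \<and> norm y = 1 \<and> 0 \<le> lm \<and> lm \<le> ?L \<and> M *v y + e *\<^sub>R z0 = lm *\<^sub>R y"
    if e: "0 < e" "e \<le> 1" for e
  proof -
    define g where "g y = M *v y + e *\<^sub>R z0" for y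
    have gC: "g y \<in> C" if "y \<in> C" for y
      unfolding g_def using that by (intro cone_add[OF cn cv] inv cone_scale[OF cn C0]) (use e z0 in auto)
    have gnz: "g y \<noteq> 0" if "y \<in> C" for y
    proof
      assume "g y = 0"
      hence "M *v y = - (e *\<^sub>R z0)" by (simp add: g_def eq_neg_iff_add_eq_0)
      hence "- (e *\<^sub>R z0) \<in> C" using inv[OF that] by simp
      moreover have "e *\<^sub>R z0 \<in> C" using cone_scale[OF cn C0] e z0 by auto
      ultimately have "e *\<^sub>R z0 = 0" using pt by blast
      thus False using e z0 by simp
    qed
    define f where "f y = (1 / norm (g y)) *\<^sub>R g y" for y
    have cg: "continuous_on ?S g" unfolding g_def by (intro continuous_intros)
    have cf: "continuous_on ?S f" unfolding f_def
      by (intro continuous_intros cg) (use gnz in auto)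
    have fS: "f \<in> ?S \<rightarrow> ?S"
    proof
      fix y assume y: "y \<in> ?S"
      have "f y \<in> C" unfolding f_def using gC[of y] y by (intro cone_scale[OF cn C0]) auto
      moreover have "norm (f y) = 1" unfolding f_def using gnz[of y] y by simp
      ultimately show "f y \<in> ?S" by simp
    qed
    obtain y where y: "y \<in> ?S" "f y = y"
    proof (rule brouwer[OF _ _ _ cf fS])
      show "compact ?S" using compact_Int_closed[OF compact_cball cl] by (simp add: Int_commute)
      show "convex ?S" by (intro convex_Int cv convex_cball)
      show "?S \<noteq> {}" using C0 by auto
    qed auto
    have ny: "norm y = 1" using y gnz[of y] unfolding f_def by (metis IntD1 norm_eq_zero norm_scaleR norm_sgn abs_norm_cancel sgn_div_norm divide_inverse_commute inverse_eq_divide mult.commute real_norm_def)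
    have eq: "g y = norm (g y) *\<^sub>R y"
    proof -
      have "norm (g y) *\<^sub>R f y = g y" unfolding f_def using gnz[of y] y by simp
      thus ?thesis using y by simp
    qed
    have "norm (g y) \<le> ?L"
    proof -
      have "norm (g y) \<le> norm (M *v y) + norm (e *\<^sub>R z0)" unfolding g_def by (rule norm_triangle_ineq)
      also have "norm (M *v y) \<le> onorm ((*v) M) * norm y" by (rule norm_mv_le)
      also have "norm (e *\<^sub>R z0) \<le> norm z0" using e by (simp add: mult_left_le_one_le)
      finally show ?thesis using ny by simp
    qed
    thus ?thesis using y ny eq by (intro exI[of _ y] exI[of _ "norm (g y)"]) (auto simp: g_def)
  qed
  define e where "e m = inverse (real (Suc m))" for m
  have e: "0 < e m" "e m \<le> 1" for m by (auto simp: e_def field_simps)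
  obtain Y \<Lambda> where Y: "\<And>m. Y m \<in> C" "\<And>m. norm (Y m) = 1" "\<And>m. 0 \<le> \<Lambda> m" "\<And>m. \<Lambda> m \<le> ?L"
      "\<And>m. M *v Y m + e m *\<^sub>R z0 = \<Lambda> m *\<^sub>R Y m"
    using step[OF e] by metis
  let ?T = "(C \<inter> sphere 0 1) \<times> {0..?L}"
  have "compact (C \<inter> sphere 0 1)" using compact_Int_closed[OF compact_sphere cl] by (simp add: Int_commute)
  hence cT: "compact ?T" by (intro compact_Times compact_Icc)
  have inT: "\<forall>m. (Y m, \<Lambda> m) \<in> ?T" using Y by auto
  obtain l r where l: "l \<in> ?T" "strict_mono r" "((\<lambda>m. (Y m, \<Lambda> m)) \<circ> r) \<longlonglongrightarrow> l"
    using seq_compactE[OF compact_imp_seq_compact[OF cT] inT] by blast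
  obtain y lm where l2: "l = (y, lm)" by (cases l)
  have ly: "(\<lambda>m. Y (r m)) \<longlonglongrightarrow> y" using tendsto_fst[OF l(3)] l2 by (simp add: o_def)
  have ll: "(\<lambda>m. \<Lambda> (r m)) \<longlonglongrightarrow> lm" using tendsto_snd[OF l(3)] l2 by (simp add: o_def)
  have le: "(\<lambda>m. e (r m)) \<longlonglongrightarrow> 0"
    using LIMSEQ_subseq_LIMSEQ[OF LIMSEQ_inverse_real_of_nat l(2)] by (simp add: e_def o_def)
  have t1: "(\<lambda>m. M *v Y (r m) + e (r m) *\<^sub>R z0) \<longlonglongrightarrow> M *v y + 0 *\<^sub>R z0"
    by (intro tendsto_intros ly le bounded_linear.tendsto[OF matrix_vector_mul_bounded_linear])
  have t2: "(\<lambda>m. \<Lambda> (r m) *\<^sub>R Y (r m)) \<longlonglongrightarrow> lm *\<^sub>R y"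
    by (intro tendsto_intros ly ll)
  have "M *v y = lm *\<^sub>R y" using LIMSEQ_unique[OF t1] t2 Y(5) by simp
  moreover have "y \<in> C" "norm y = 1" using l l2 by auto
  ultimately show ?thesis by (intro bexI[of _ y]) auto
qed


definition cvec :: "real^'n \<Rightarrow> complex^'n" where "cvec x = (\<chi> i. complex_of_real (x $ i))"
definition cmat :: "real^'m^'k \<Rightarrow> complex^'m^'k" where "cmat M = (\<chi> i j. complex_of_real (M $ i $ j))"
definition evc :: "real^'n^'n \<Rightarrow> complex poly \<Rightarrow> complex^'n \<Rightarrow> complex^'n" where
  "evc A p w = (\<Sum>i\<le>degree p. coeff p i *s (cmat (matpow A i) *v w))"
definition evr :: "real^'n^'n \<Rightarrow> real poly \<Rightarrow> real^'n \<Rightarrow> real^'n" where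
  "evr A p x = (\<Sum>i\<le>degree p. coeff p i *\<^sub>R (matpow A i *v x))"

lemma cmat_mult: "cmat (M ** N) = cmat M ** cmat N"
  by (simp add: cmat_def vec_eq_iff matrix_matrix_mult_def)

lemma cmat_vec: "cmat M *v cvec x = cvec (M *v x)"
  by (simp add: cmat_def cvec_def vec_eq_iff matrix_vector_mult_def)

lemma cvec_eq_0: "cvec x = 0 \<longleftrightarrow> x = 0"
  by (simp add: cvec_def vec_eq_iff)

lemma cmat_matpow_Suc: "cmat (matpow A (Suc i)) *v w = cmat A *v (cmat (matpow A i) *v w)"
  by (simp add: cmat_mult matrix_vector_mul_assoc)

lemma mv_sum: "M *v sum f S = sum (\<lambda>i. M *v f i) S"
  by (induction S rule: infinite_finite_induct) (auto simp: matrix_vector_right_distrib)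

lemma mv_smult: fixes M :: "'a::field^'n^'m" shows "M *v (c *s x) = c *s (M *v x)"
  by (rule vector_scalar_commute)

lemma smult_sum_vec: fixes c :: "'a::comm_ring_1" and f :: "_ \<Rightarrow> 'a^'n" shows "c *s sum f S = sum (\<lambda>i. c *s f i) S"
  by (induction S rule: infinite_finite_induct) (auto simp: vector_add_ldistrib)

lemma evc_upto:
  assumes "degree p \<le> N"
  shows "evc A p w = (\<Sum>i\<le>N. coeff p i *s (cmat (matpow A i) *v w))"
  unfolding evc_def
  by (rule sum.mono_neutral_left) (use assms in \<open>auto simp: coeff_eq_0\<close>)

lemma evr_upto:
  assumes "degree p \<le> N"
  shows "evr A p x = (\<Sum>i\<le>N. coeff p i *\<^sub>R (matpow A i *v x))"
  unfolding evr_def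
  by (rule sum.mono_neutral_left) (use assms in \<open>auto simp: coeff_eq_0\<close>)

lemma evc_add: "evc A (p + q) w = evc A p w + evc A q w"
proof -
  let ?N = "max (degree p) (degree q)"
  have "evc A (p + q) w = (\<Sum>i\<le>?N. coeff (p + q) i *s (cmat (matpow A i) *v w))"
    by (rule evc_upto) (simp add: degree_add_le)
  also have "\<dots> = (\<Sum>i\<le>?N. coeff p i *s (cmat (matpow A i) *v w)) + (\<Sum>i\<le>?N. coeff q i *s (cmat (matpow A i) *v w))"
    by (simp add: vector_sadd_rdistrib sum.distrib)
  also have "\<dots> = evc A p w + evc A q w" by (simp add: evc_upto[of p ?N] evc_upto[of q ?N])
  finally show ?thesis .
qed

lemma evc_smult: "evc A (smult c p) w = c *s evc A p w"
proof -
  have "evc A (smult c p) w = (\<Sum>i\<le>degree p. coeff (smult c p) i *s (cmat (matpow A i) *v w))"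
    by (rule evc_upto) (simp add: degree_smult_le)
  also have "\<dots> = c *s evc A p w" by (simp add: evc_def smult_sum_vec vector_smult_assoc)
  finally show ?thesis .
qed

lemma evc_pCons0: "evc A (pCons 0 p) w = cmat A *v evc A p w"
proof -
  have "evc A (pCons 0 p) w = (\<Sum>i\<le>Suc (degree p). coeff (pCons 0 p) i *s (cmat (matpow A i) *v w))"
    by (rule evc_upto) (simp add: degree_pCons_le)
  also have "\<dots> = (\<Sum>i\<le>degree p. coeff p i *s (cmat (matpow A (Suc i)) *v w))"
    by (subst sum.atMost_Suc_shift) simp
  also have "\<dots> = cmat A *v evc A p w"
    by (simp add: evc_def mv_sum mv_smult cmat_mult matrix_vector_mul_assoc)
  finally show ?thesis .
qed

lemma evc_lin: "evc A ([:-\<nu>, 1:] * p) w = cmat A *v evc A p w - \<nu> *s evc A p w"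
proof -
  have "[:-\<nu>, 1:] * p = smult (-\<nu>) p + pCons 0 p" by (simp add: mult_pCons_left)
  hence "evc A ([:-\<nu>, 1:] * p) w = (-\<nu>) *s evc A p w + cmat A *v evc A p w"
    by (simp only: evc_add evc_smult evc_pCons0)
  moreover have "(-\<nu>) *s evc A p w = - (\<nu> *s evc A p w)" by (simp add: vec_eq_iff vector_scalar_mult_def)
  ultimately show ?thesis by simp
qed

lemma cvec_sum_scale: "cvec (\<Sum>i\<in>S. c i *\<^sub>R v i) = (\<Sum>i\<in>S. complex_of_real (c i) *s cvec (v i))"
  by (induction S rule: infinite_finite_induct)
     (auto simp: cvec_def vec_eq_iff vector_scalar_mult_def)

lemma evc_of_real: "evc A (map_poly of_real p) (cvec x) = cvec (evr A p x)"
  unfolding evc_def evr_def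
  by (simp add: degree_map_poly coeff_map_poly cmat_vec cvec_sum_scale)

lemma evc_re_im:
  assumes "evc A p (cvec x) = 0"
  shows "evr A (map_poly Re p) x = 0" "evr A (map_poly Im p) x = 0"
proof -
  have dr: "degree (map_poly Re p) \<le> degree p" and di: "degree (map_poly Im p) \<le> degree p"
    by (rule degree_le, simp add: coeff_map_poly coeff_eq_0)+
  have comp: "(evc A p (cvec x)) $ j = (\<Sum>i\<le>degree p. coeff p i * of_real ((matpow A i *v x) $ j))" for j
    by (simp add: evc_def cmat_vec) (simp add: cvec_def)
  have "(evr A (map_poly Re p) x) $ j = Re ((evc A p (cvec x)) $ j)" for j
    by (simp add: evr_upto[OF dr] comp coeff_map_poly Re_sum)
  thus "evr A (map_poly Re p) x = 0" using assms by (simp add: vec_eq_iff)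
  have "(evr A (map_poly Im p) x) $ j = Im ((evc A p (cvec x)) $ j)" for j
    by (simp add: evr_upto[OF di] comp coeff_map_poly Im_sum)
  thus "evr A (map_poly Im p) x = 0" using assms by (simp add: vec_eq_iff)
qed

lemma poly_re_im_0: "map_poly Re p = 0 \<Longrightarrow> map_poly Im p = 0 \<Longrightarrow> p = 0"
  by (simp add: poly_eq_iff coeff_map_poly complex_eq_iff)


lemma cmat_add_mv: "cmat (X + Y) *v w = cmat X *v w + cmat Y *v w"
  by (simp add: cmat_def vec_eq_iff matrix_vector_mult_def sum.distrib distrib_right)

lemma cmat_scale_mv: "cmat (r *\<^sub>R X) *v w = r *\<^sub>R (cmat X *v w)"
  by (simp add: cmat_def vec_eq_iff matrix_vector_mult_def scaleR_sum_right scaleR_conv_of_real[where 'a=complex] sum_distrib_left mult_ac)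

lemma cmat_0: "cmat 0 = 0" by (simp add: cmat_def vec_eq_iff)

lemma cmat_sum_mv: "cmat (\<Sum>i\<in>S. c i *\<^sub>R M i) *v w = (\<Sum>i\<in>S. c i *\<^sub>R (cmat (M i) *v w))"
  by (induction S rule: infinite_finite_induct) (auto simp: cmat_add_mv cmat_scale_mv cmat_0)

lemma bl_cmat_mv: "bounded_linear (\<lambda>X::real^'n^'m. cmat X *v w)"
  apply (subst linear_conv_bounded_linear[symmetric])
  by (auto simp: linear_iff cmat_add_mv cmat_scale_mv)

lemma bl_smult_vec: "bounded_linear (\<lambda>z::complex. z *s (w::complex^'n))"
proof -
  have "linear (\<lambda>z::complex. z *s (w::complex^'n))"
    by (auto simp: linear_iff vec_eq_iff vector_scalar_mult_def scaleR_vec_def scaleR_conv_of_real[where 'a=complex] distrib_right)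
  thus ?thesis by (simp add: linear_conv_bounded_linear)
qed

lemma Bc_sums:
  fixes A :: "real^'n^'n"
  shows "(\<lambda>k. (c ^ k / fact k) *\<^sub>R (cmat (matpow A k) *v w)) sums (cmat (mexp (c *\<^sub>R A)) *v w)"
proof -
  have "(\<lambda>k. (1 / fact k) *\<^sub>R matpow (c *\<^sub>R A) k) sums mexp (c *\<^sub>R A)"
    unfolding mexp_def by (rule summable_sums[OF summable_mexp])
  from bounded_linear.sums[OF bl_cmat_mv this, of w]
  show ?thesis by (simp add: matpow_scale cmat_scale_mv)
qed

lemma cpow_eigen:
  assumes "cmat A *v w = \<nu> *s w"
  shows "cmat (matpow A k) *v w = \<nu> ^ k *s w"
proof (induction k)
  case 0 then show ?case by (simp add: cmat_def mat_def vec_eq_iff matrix_vector_mult_def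
        if_distrib if_distribR cong: if_cong)
next
  case (Suc k) then show ?case
    by (simp only: cmat_matpow_Suc mv_smult assms vector_smult_assoc power_Suc mult.commute)
qed

lemma Bc_eigen:
  fixes A :: "real^'n^'n"
  assumes "cmat A *v w = \<nu> *s w"
  shows "cmat (mexp (c *\<^sub>R A)) *v w = exp (complex_of_real c * \<nu>) *s w"
proof -
  have s: "(\<lambda>k. ((complex_of_real c * \<nu>) ^ k /\<^sub>R fact k) *s w) sums (exp (complex_of_real c * \<nu>) *s w)"
    by (rule bounded_linear.sums[OF bl_smult_vec exp_converges])
  have e: "(\<lambda>k. ((complex_of_real c * \<nu>) ^ k /\<^sub>R fact k) *s w) = (\<lambda>k. (c ^ k / fact k) *\<^sub>R (cmat (matpow A k) *v w))"
    by (simp add: fun_eq_iff cpow_eigen[OF assms] vec_eq_iff vector_scalar_mult_def scaleR_conv_of_real[where 'a=complex]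
        power_mult_distrib divide_inverse mult_ac)
  show ?thesis using sums_unique2[OF Bc_sums s[unfolded e]] .
qed

lemma cpow_gen:
  assumes "cmat A *v u1 = \<nu> *s u1 + u0" "cmat A *v u0 = \<nu> *s u0"
  shows "cmat (matpow A k) *v u1 = \<nu> ^ k *s u1 + (of_nat k * \<nu> ^ (k - 1)) *s u0"
proof (induction k)
  case 0 then show ?case by (simp add: cmat_def mat_def vec_eq_iff matrix_vector_mult_def
        if_distrib if_distribR cong: if_cong)
next
  case (Suc k)
  have "cmat (matpow A (Suc k)) *v u1 = cmat A *v (\<nu> ^ k *s u1 + (of_nat k * \<nu> ^ (k - 1)) *s u0)"
    by (simp only: cmat_matpow_Suc Suc)
  also have "\<dots> = \<nu> ^ k *s (\<nu> *s u1 + u0) + (of_nat k * \<nu> ^ (k - 1)) *s (\<nu> *s u0)"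
    by (simp only: matrix_vector_right_distrib mv_smult assms)
  also have "\<dots> = \<nu> ^ Suc k *s u1 + (of_nat (Suc k) * \<nu> ^ (Suc k - 1)) *s u0"
    by (cases k) (auto simp: vec_eq_iff vector_scalar_mult_def algebra_simps)
  finally show ?case .
qed

lemma Bc_gen:
  fixes A :: "real^'n^'n"
  assumes "cmat A *v u1 = \<nu> *s u1 + u0" "cmat A *v u0 = \<nu> *s u0"
  shows "cmat (mexp (c *\<^sub>R A)) *v u1 = exp (complex_of_real c * \<nu>) *s u1
           + (complex_of_real c * exp (complex_of_real c * \<nu>)) *s u0"
proof -
  define b where "b k = complex_of_real (c ^ k / fact k) * (of_nat k * \<nu> ^ (k - 1))" for k
  have bS: "b (Suc j) = complex_of_real c * ((complex_of_real c * \<nu>) ^ j /\<^sub>R fact j)" for j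
    by (simp add: b_def scaleR_conv_of_real[where 'a=complex] power_mult_distrib field_simps del: of_nat_Suc)
  have "(\<lambda>j. b (Suc j)) sums (complex_of_real c * exp (complex_of_real c * \<nu>))"
    unfolding bS by (rule sums_mult[OF exp_converges])
  moreover have "b 0 = 0" by (simp add: b_def)
  ultimately have bs: "b sums (complex_of_real c * exp (complex_of_real c * \<nu>))"
    using sums_Suc_iff[of b] by simp
  have s1: "(\<lambda>k. ((complex_of_real c * \<nu>) ^ k /\<^sub>R fact k) *s u1) sums (exp (complex_of_real c * \<nu>) *s u1)"
    by (rule bounded_linear.sums[OF bl_smult_vec exp_converges])
  have s2: "(\<lambda>k. b k *s u0) sums ((complex_of_real c * exp (complex_of_real c * \<nu>)) *s u0)"
    by (rule bounded_linear.sums[OF bl_smult_vec bs])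
  have e: "(\<lambda>k. ((complex_of_real c * \<nu>) ^ k /\<^sub>R fact k) *s u1 + b k *s u0) = (\<lambda>k. (c ^ k / fact k) *\<^sub>R (cmat (matpow A k) *v u1))"
    by (simp add: fun_eq_iff cpow_gen[OF assms] vec_eq_iff vector_scalar_mult_def scaleR_conv_of_real[where 'a=complex]
        power_mult_distrib b_def algebra_simps divide_inverse)
  show ?thesis using sums_unique2[OF Bc_sums sums_add[OF s1 s2, unfolded e]] .
qed

lemma mexp_comm_mat:
  fixes A :: "real^'n^'n"
  shows "A ** mexp (c *\<^sub>R A) = mexp (c *\<^sub>R A) ** A"
  by (simp add: matrix_eq matrix_vector_mul_assoc[symmetric] mexp_comm_A)

lemma evc_B:
  fixes A :: "real^'n^'n"
  assumes "mexp (c *\<^sub>R A) *v x = \<rho> *\<^sub>R x"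
  shows "cmat (mexp (c *\<^sub>R A)) *v evc A p (cvec x) = complex_of_real \<rho> *s evc A p (cvec x)"
proof -
  let ?E = "mexp (c *\<^sub>R A)"
  have com: "cmat ?E *v (cmat (matpow A i) *v y) = cmat (matpow A i) *v (cmat ?E *v y)" for i y
  proof -
    have "?E ** matpow A i = matpow A i ** ?E"
      by (rule matpow_comm_gen) (simp add: mexp_comm_mat)
    thus ?thesis by (simp add: matrix_vector_mul_assoc cmat_mult[symmetric])
  qed
  have ex: "cmat ?E *v cvec x = complex_of_real \<rho> *s cvec x"
    by (simp add: cmat_vec assms) (simp add: cvec_def vec_eq_iff vector_scalar_mult_def)
  show ?thesis
    by (simp add: evc_def mv_sum mv_smult com ex smult_sum_vec vector_smult_assoc mult.commute)
qed

lemma span_powers: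
  fixes A :: "real^'n^'n"
  shows "span (matpow A ` {..<k}) = {\<Sum>i<k. c i *\<^sub>R matpow A i | c. True}"
proof (induction k)
  case 0 then show ?case by simp
next
  case (Suc k)
  have "span (matpow A ` {..<Suc k}) = span (insert (matpow A k) (matpow A ` {..<k}))"
    by (simp add: lessThan_Suc)
  also have "\<dots> = {x. \<exists>r. x - r *\<^sub>R matpow A k \<in> span (matpow A ` {..<k})}"
    by (rule span_insert)
  also have "\<dots> = {\<Sum>i<Suc k. c i *\<^sub>R matpow A i | c. True}"
  proof safe
    fix x r assume "x - r *\<^sub>R matpow A k \<in> span (matpow A ` {..<k})"
    then obtain c where c: "x - r *\<^sub>R matpow A k = (\<Sum>i<k. c i *\<^sub>R matpow A i)" using Suc by auto
    show "\<exists>c. x = (\<Sum>i<Suc k. c i *\<^sub>R matpow A i) \<and> True"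
      by (intro exI[of _ "c(k := r)"]) (use c in \<open>auto simp: algebra_simps\<close>)
  next
    fix c
    show "\<exists>r. (\<Sum>i<Suc k. c i *\<^sub>R matpow A i) - r *\<^sub>R matpow A k \<in> span (matpow A ` {..<k})"
      by (intro exI[of _ "c k"]) (use Suc in auto)
  qed
  finally show ?case .
qed

lemma exists_annihilating:
  fixes A :: "real^'n^'n"
  shows "\<exists>q::real poly. q \<noteq> 0 \<and> (\<Sum>i\<le>degree q. coeff q i *\<^sub>R matpow A i) = 0"
proof -
  have "\<exists>k. matpow A k \<in> span (matpow A ` {..<k})"
  proof (rule ccontr)
    assume H: "\<not> ?thesis"
    have ind: "independent (matpow A ` {..<k}) \<and> card (matpow A ` {..<k}) = k" for k
    proof (induction k)
      case 0 then show ?case by (simp add: independent_empty)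
    next
      case (Suc k)
      have nin: "matpow A k \<notin> span (matpow A ` {..<k})" using H by auto
      hence nin2: "matpow A k \<notin> matpow A ` {..<k}" by (metis span_base)
      have eq: "matpow A ` {..<Suc k} = insert (matpow A k) (matpow A ` {..<k})" by (simp only: lessThan_Suc image_insert)
      have i1: "independent (insert (matpow A k) (matpow A ` {..<k}))"
        by (rule independent_insertI[OF nin]) (use Suc in blast)
      have c1: "card (insert (matpow A k) (matpow A ` {..<k})) = Suc k"
      proof -
        have "finite (matpow A ` {..<k})" by simp
        then show ?thesis using Suc nin2 card_insert_disjoint by metis
      qed
      show ?case unfolding eq using i1 c1 by blast
    qed
    let ?S = "matpow A ` {..<Suc DIM(real^'n^'n)}"
    have "independent ?S" "card ?S = Suc DIM(real^'n^'n)" using ind by blast+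
    moreover have "card ?S \<le> DIM(real^'n^'n)" using independent_bound[of ?S] \<open>independent ?S\<close> by blast
    ultimately show False by linarith
  qed
  then obtain k where "matpow A k \<in> span (matpow A ` {..<k})" by blast
  then obtain c where c: "matpow A k = (\<Sum>i<k. c i *\<^sub>R matpow A i)" by (auto simp: span_powers)
  define q where "q = monom (1::real) k - (\<Sum>i<k. monom (c i) i)"
  have cq: "coeff q j = (if j = k then 1 else 0) - (if j < k then c j else 0)" for j
    by (simp add: q_def coeff_sum coeff_monom)
  have qnz: "q \<noteq> 0" using cq[of k] by auto
  have dq: "degree q \<le> k" by (rule degree_le) (simp add: cq)
  have "(\<Sum>i\<le>degree q. coeff q i *\<^sub>R matpow A i) = (\<Sum>i\<le>k. coeff q i *\<^sub>R matpow A i)"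
    using dq by (intro sum.mono_neutral_left) (auto simp: coeff_eq_0)
  also have "\<dots> = (\<Sum>i\<le>k. (if i = k then 1 else 0) *\<^sub>R matpow A i) - (\<Sum>i\<le>k. (if i < k then c i else 0) *\<^sub>R matpow A i)"
    by (simp add: cq scaleR_diff_left sum_subtractf)
  also have "\<dots> = matpow A k - (\<Sum>i<k. c i *\<^sub>R matpow A i)"
  proof -
    have "(\<Sum>i\<le>k. (if i < k then c i else 0) *\<^sub>R matpow A i) = (\<Sum>i<Suc k. (if i < k then c i else 0) *\<^sub>R matpow A i)"
      by (simp only: lessThan_Suc_atMost)
    also have "\<dots> = (\<Sum>i<k. (if i < k then c i else 0) *\<^sub>R matpow A i)"
      by (simp only: sum.lessThan_Suc) simp
    also have "\<dots> = (\<Sum>i<k. c i *\<^sub>R matpow A i)"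
      by (rule sum.cong) auto
    finally have 1: "(\<Sum>i\<le>k. (if i < k then c i else 0) *\<^sub>R matpow A i) = (\<Sum>i<k. c i *\<^sub>R matpow A i)" .
    have "(\<Sum>i\<le>k. (if i = k then 1 else 0) *\<^sub>R matpow A i) = (\<Sum>i\<le>k. (if i = k then matpow A i else 0))"
      by (rule sum.cong) auto
    also have "\<dots> = matpow A k" by (simp only: sum.delta finite_atMost) simp
    finally show ?thesis using 1 by simp
  qed
  also have "\<dots> = 0" using c by simp
  finally show ?thesis using qnz by blast
qed

lemma eigen_root:
  fixes A :: "real^'n^'n"
  assumes q: "(\<Sum>i\<le>degree q. coeff q i *\<^sub>R matpow A i) = 0"
    and w: "cmat A *v w = \<nu> *s w" "w \<noteq> 0"
  shows "poly (map_poly complex_of_real q) \<nu> = 0"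
proof -
  have "0 = cmat (\<Sum>i\<le>degree q. coeff q i *\<^sub>R matpow A i) *v w" using q by (simp add: cmat_0)
  also have "\<dots> = (\<Sum>i\<le>degree q. coeff q i *\<^sub>R (\<nu> ^ i *s w))"
    by (simp add: cmat_sum_mv cpow_eigen[OF w(1)])
  also have "\<dots> = poly (map_poly complex_of_real q) \<nu> *s w"
    by (simp add: poly_altdef degree_map_poly coeff_map_poly vec_eq_iff vector_scalar_mult_def
        scaleR_vec_def scaleR_conv_of_real[where 'a=complex] sum_distrib_right sum_distrib_left mult_ac)
  finally show ?thesis using w(2) by simp
qed


lemma mv_sum_left: "(\<Sum>i\<in>S. c i *\<^sub>R M i) *v x = (\<Sum>i\<in>S. c i *\<^sub>R (M i *v x))"
  for M :: "_ \<Rightarrow> real^'n^'m"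
  by (induction S rule: infinite_finite_induct)
     (auto simp: matrix_vector_mult_add_rdistrib scaleR_matrix_vector_assoc)

lemma deg_lin: fixes r :: "'a::idom poly" shows "r \<noteq> 0 \<Longrightarrow> degree ([:a, 1:] * r) = Suc (degree r)"
  using degree_mult_eq[of "[:a,1:]" r] by simp

lemma exp_root_poly:
  fixes p :: "complex poly"
  assumes "degree p \<ge> 1"
  shows "\<exists>z. poly p z = 0"
proof -
  have "\<not> constant (poly p)" using assms by (simp add: constant_degree)
  thus ?thesis using fundamental_theorem_of_algebra by blast
qed

lemma spectral:
  fixes A :: "real^'n^'n" and q :: "real poly"
  assumes q: "q \<noteq> 0" "(\<Sum>i\<le>degree q. coeff q i *\<^sub>R matpow A i) = 0"
    and x: "x \<noteq> 0" "mexp (c *\<^sub>R A) *v x = \<rho> *\<^sub>R x" "c \<noteq> 0" "\<not> (\<exists>\<mu>. A *v x = \<mu> *\<^sub>R x)"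
  shows "\<exists>\<nu> \<nu>'. poly (map_poly complex_of_real q) \<nu> = 0 \<and> poly (map_poly complex_of_real q) \<nu>' = 0
           \<and> \<nu> \<noteq> \<nu>' \<and> exp (complex_of_real c * (\<nu> - \<nu>')) = 1"
proof -
  let ?xc = "cvec x"
  let ?B = "cmat (mexp (c *\<^sub>R A))"
  have evq: "evr A q x = 0" using q(2) by (simp add: evr_def mv_sum_left[symmetric])
  define P where "P d \<longleftrightarrow> (\<exists>r. r \<noteq> 0 \<and> evr A r x = 0 \<and> degree r = d)" for d
  have "P (degree q)" using q evq by (auto simp: P_def)
  then obtain d where Pd: "P d" and dmin: "\<And>d'. d' < d \<Longrightarrow> \<not> P d'"
    by (metis exists_least_iff)
  then obtain p where p: "p \<noteq> 0" "evr A p x = 0" "degree p = d" by (auto simp: P_def)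
  have pmin: "degree p \<le> degree r" if "r \<noteq> 0" "evr A r x = 0" for r
    using dmin[of "degree r"] that p(3) by (force simp: P_def)
  have d2: "degree p \<ge> 2"
  proof (rule ccontr)
    assume "\<not> degree p \<ge> 2"
    hence "degree p = 0 \<or> degree p = 1" by auto
    thus False
    proof
      assume d0: "degree p = 0"
      hence "evr A p x = coeff p 0 *\<^sub>R x" by (simp add: evr_def)
      moreover have "coeff p 0 \<noteq> 0" using p(1) d0 by (metis leading_coeff_0_iff)
      ultimately show False using p(2) x(1) by simp
    next
      assume d1: "degree p = 1"
      hence "evr A p x = coeff p 0 *\<^sub>R x + coeff p 1 *\<^sub>R (A *v x)" by (simp add: evr_def)
      moreover have c1: "coeff p 1 \<noteq> 0" using p(1) d1 by (metis leading_coeff_0_iff)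
      ultimately have eq: "coeff p 1 *\<^sub>R (A *v x) = - (coeff p 0 *\<^sub>R x)" and c1: "coeff p 1 \<noteq> 0"
        using p(2) by (auto simp: eq_neg_iff_add_eq_0 add.commute)
      have "A *v x = (1 / coeff p 1) *\<^sub>R (coeff p 1 *\<^sub>R (A *v x))" using c1 by simp
      also have "\<dots> = (- coeff p 0 / coeff p 1) *\<^sub>R x" by (simp only: eq) (simp add: divide_inverse)
      finally have "A *v x = (- coeff p 0 / coeff p 1) *\<^sub>R x" .
      thus False using x(4) by blast
    qed
  qed
  have cmin: "evc A r ?xc \<noteq> 0" if "r \<noteq> 0" "degree r < degree p" for r
  proof
    assume H: "evc A r ?xc = 0"
    have dre: "degree (map_poly Re r) \<le> degree r" and dim: "degree (map_poly Im r) \<le> degree r"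
      by (rule degree_le, simp add: coeff_map_poly coeff_eq_0)+
    have "map_poly Re r = 0"
      using pmin[OF _ evc_re_im(1)[OF H]] dre that(2) by fastforce
    moreover have "map_poly Im r = 0"
      using pmin[OF _ evc_re_im(2)[OF H]] dim that(2) by fastforce
    ultimately show False using poly_re_im_0 that(1) by blast
  qed
  define pc where "pc = map_poly complex_of_real p"
  have dpc: "degree pc = degree p" by (simp add: pc_def degree_map_poly)
  have evpc: "evc A pc ?xc = 0" using p(2) by (simp add: pc_def evc_of_real cvec_eq_0)
  obtain \<nu>0 where r0: "poly pc \<nu>0 = 0" using exp_root_poly[of pc] dpc d2 by auto
  then obtain p1 where p1: "pc = [:-\<nu>0, 1:] * p1" using poly_eq_0_iff_dvd by (metis dvdE)
  have p1nz: "p1 \<noteq> 0" using p1 dpc d2 by auto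
  have dp1: "degree pc = Suc (degree p1)" unfolding p1 using p1nz by (rule deg_lin)
  obtain \<nu>1 where r1: "poly p1 \<nu>1 = 0" using exp_root_poly[of p1] dp1 dpc d2 by auto
  then obtain s where s: "p1 = [:-\<nu>1, 1:] * s" using poly_eq_0_iff_dvd by (metis dvdE)
  have snz: "s \<noteq> 0" using s p1nz by auto
  have ds: "degree p1 = Suc (degree s)" unfolding s using snz by (rule deg_lin)
  have pcf: "pc = [:-\<nu>0, 1:] * ([:-\<nu>1, 1:] * s)" using p1 s by simp
  have pcf2: "pc = [:-\<nu>1, 1:] * ([:-\<nu>0, 1:] * s)" unfolding pcf by (rule mult.left_commute)
  have lin_nz: "evc A ([:-\<nu>, 1:] * s) ?xc \<noteq> 0" for \<nu>
  proof (rule cmin)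
    show "[:- \<nu>, 1:] * s \<noteq> 0" using snz no_zero_divisors[of "[:- \<nu>, 1:]" s] by (metis pCons_eq_0_iff zero_neq_one)
    show "degree ([:- \<nu>, 1:] * s) < degree p" using deg_lin[OF snz, of "-\<nu>"] dp1 ds dpc by simp
  qed
  define wA where "wA = evc A ([:-\<nu>1, 1:] * s) ?xc"
  define wB where "wB = evc A ([:-\<nu>0, 1:] * s) ?xc"
  have eA: "cmat A *v wA = \<nu>0 *s wA"
    using evc_lin[of A \<nu>0 "[:-\<nu>1, 1:] * s" ?xc] evpc pcf by (simp add: wA_def)
  have eB: "cmat A *v wB = \<nu>1 *s wB"
    using evc_lin[of A \<nu>1 "[:-\<nu>0, 1:] * s" ?xc] evpc pcf2 by (simp add: wB_def)
  have nzA: "wA \<noteq> 0" and nzB: "wB \<noteq> 0" unfolding wA_def wB_def by (rule lin_nz)+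
  have cancel: "a = b" if "a *s w = b *s w" "w \<noteq> 0" for a b :: complex and w :: "complex^'n"
  proof -
    have "(a - b) *s w = 0" using that(1) by (simp add: vec_eq_iff vector_scalar_mult_def algebra_simps)
    thus ?thesis using that(2) by simp
  qed
  have expA: "exp (complex_of_real c * \<nu>0) = complex_of_real \<rho>"
    using Bc_eigen[OF eA, of c] evc_B[OF x(2), of "[:-\<nu>1, 1:] * s"] nzA cancel unfolding wA_def by metis
  have expB: "exp (complex_of_real c * \<nu>1) = complex_of_real \<rho>"
    using Bc_eigen[OF eB, of c] evc_B[OF x(2), of "[:-\<nu>0, 1:] * s"] nzB cancel unfolding wB_def by metis
  show ?thesis
  proof (cases "\<nu>0 = \<nu>1")
    case False
    have "exp (complex_of_real c * (\<nu>0 - \<nu>1)) = exp (complex_of_real c * \<nu>0) / exp (complex_of_real c * \<nu>1)"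
      by (simp add: right_diff_distrib exp_diff)
    also have "\<dots> = 1" using expA expB exp_not_eq_zero[of "complex_of_real c * \<nu>0"] by simp
    finally have "exp (complex_of_real c * (\<nu>0 - \<nu>1)) = 1" .
    moreover have "poly (map_poly complex_of_real q) \<nu>0 = 0" by (rule eigen_root[OF q(2) eA nzA])
    moreover have "poly (map_poly complex_of_real q) \<nu>1 = 0" by (rule eigen_root[OF q(2) eB nzB])
    ultimately show ?thesis using False by blast
  next
    case True
    define u1 where "u1 = evc A s ?xc"
    have e1: "cmat A *v u1 = \<nu>0 *s u1 + wA"
      using evc_lin[of A \<nu>0 s ?xc] True unfolding u1_def wA_def by (simp add: algebra_simps)
    have g: "?B *v u1 = exp (complex_of_real c * \<nu>0) *s u1 + (complex_of_real c * exp (complex_of_real c * \<nu>0)) *s wA"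
      by (rule Bc_gen[OF e1 eA])
    have "?B *v u1 = complex_of_real \<rho> *s u1" unfolding u1_def by (rule evc_B[OF x(2)])
    hence "(complex_of_real c * exp (complex_of_real c * \<nu>0)) *s wA = 0"
      using g expA by (simp add: vec_eq_iff vector_scalar_mult_def)
    hence "complex_of_real c * exp (complex_of_real c * \<nu>0) = 0" using nzA by simp
    thus ?thesis using x(3) by simp
  qed
qed


lemma exc_finite:
  fixes R :: "complex set"
  assumes R: "finite R"
  shows "finite {c::real. 0 < c \<and> c \<le> Y \<and> (\<exists>\<nu>\<in>R. \<exists>\<nu>'\<in>R. \<nu> \<noteq> \<nu>' \<and> exp (complex_of_real c * (\<nu> - \<nu>')) = 1)}"
proof -
  define M where "M = (\<Sum>p\<in>R \<times> R. \<bar>Im (fst p - snd p)\<bar>)"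
  define N where "N = (ceiling (Y * M) :: int)"
  let ?f = "\<lambda>(p, n::int). 2 * pi * of_int n / Im (fst p - snd p)"
  have "{c::real. 0 < c \<and> c \<le> Y \<and> (\<exists>\<nu>\<in>R. \<exists>\<nu>'\<in>R. \<nu> \<noteq> \<nu>' \<and> exp (complex_of_real c * (\<nu> - \<nu>')) = 1)}
        \<subseteq> ?f ` ((R \<times> R) \<times> {-N..N})"
  proof
    fix c assume "c \<in> {c::real. 0 < c \<and> c \<le> Y \<and> (\<exists>\<nu>\<in>R. \<exists>\<nu>'\<in>R. \<nu> \<noteq> \<nu>' \<and> exp (complex_of_real c * (\<nu> - \<nu>')) = 1)}"
    then obtain \<nu> \<nu>' where c: "0 < c" "c \<le> Y" "\<nu> \<in> R" "\<nu>' \<in> R" "\<nu> \<noteq> \<nu>'"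
      "exp (complex_of_real c * (\<nu> - \<nu>')) = 1" by auto
    from c(6) obtain n :: int where re: "Re (complex_of_real c * (\<nu> - \<nu>')) = 0"
      and im: "Im (complex_of_real c * (\<nu> - \<nu>')) = of_int (2 * n) * pi"
      unfolding exp_eq_1 by blast
    have "Re (\<nu> - \<nu>') = 0" using re c(1) by simp
    hence imnz: "Im (\<nu> - \<nu>') \<noteq> 0" using c(5) by (metis complex_eqI eq_iff_diff_eq_0 zero_complex.simps)
    have im2: "c * Im (\<nu> - \<nu>') = 2 * pi * of_int n" using im by simp
    hence ceq: "c = 2 * pi * of_int n / Im (\<nu> - \<nu>')" using imnz by (simp add: field_simps)
    have "\<bar>Im (\<nu> - \<nu>')\<bar> \<le> M"
      unfolding M_def using member_le_sum[of "(\<nu>, \<nu>')" "R \<times> R" "\<lambda>p. \<bar>Im (fst p - snd p)\<bar>"] c R by auto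
    have "\<bar>2 * pi * of_int n\<bar> = c * \<bar>Im (\<nu> - \<nu>')\<bar>" using im2 c(1) by (metis abs_mult abs_of_pos)
    also have "\<dots> \<le> Y * M" using c(1,2) \<open>\<bar>Im (\<nu> - \<nu>')\<bar> \<le> M\<close> by (intro mult_mono) auto
    finally have "\<bar>2 * pi * of_int n\<bar> \<le> Y * M" .
    moreover have "\<bar>of_int n\<bar> \<le> \<bar>2 * pi * of_int n\<bar>"
      using pi_gt3 by (simp add: abs_mult) (smt (verit) mult_le_cancel_right1 of_int_abs abs_ge_zero)
    ultimately have "\<bar>real_of_int n\<bar> \<le> Y * M" by linarith
    hence "\<bar>n\<bar> \<le> N" unfolding N_def by (metis ceiling_mono ceiling_of_int of_int_abs)
    hence "n \<in> {-N..N}" by auto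
    thus "c \<in> ?f ` ((R \<times> R) \<times> {-N..N})" using c ceq by (intro image_eqI[of _ _ "((\<nu>, \<nu>'), n)"]) auto
  qed
  moreover have "finite (?f ` ((R \<times> R) \<times> {-N..N}))" using R by auto
  ultimately show ?thesis by (rule finite_subset)
qed


lemma map_poly_of_real_nz: "q \<noteq> 0 \<Longrightarrow> map_poly complex_of_real q \<noteq> 0"
  by (simp add: poly_eq_iff coeff_map_poly) 

lemma key_exc:
  fixes K :: "(real^'n) set" and A :: "real^'n^'n"
  assumes pc: "proper_cone K" and en: "exp_K_nonneg K A"
    and i: "\<not> (\<exists>x \<mu>. x \<in> frontier K \<and> x \<noteq> 0 \<and> A *v x = \<mu> *\<^sub>R x)"
    and q: "q \<noteq> 0" "(\<Sum>i\<le>degree q. coeff q i *\<^sub>R matpow A i) = 0"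
    and t: "t > 0" "\<not> K_irreducible K (mexp (t *\<^sub>R A))"
  shows "\<exists>\<nu>\<in>{\<nu>. poly (map_poly complex_of_real q) \<nu> = 0}. \<exists>\<nu>'\<in>{\<nu>. poly (map_poly complex_of_real q) \<nu> = 0}.
           \<nu> \<noteq> \<nu>' \<and> exp (complex_of_real t * (\<nu> - \<nu>')) = 1"
proof -
  let ?B = "mexp (t *\<^sub>R A)"
  have cp: "cone_preserving K ?B" using en t(1) unfolding exp_K_nonneg_def by auto
  then obtain F where F: "nontrivial_face K F" "\<And>x. x \<in> F \<Longrightarrow> ?B *v x \<in> F"
    using t(2) unfolding K_irreducible_def by blast
  have fF: "face K F" using F(1) unfolding nontrivial_face_def by auto
  have FK: "F \<subseteq> K" using fF unfolding face_def by auto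
  have Kcl: "closed K" using pc unfolding proper_cone_def by auto
  let ?C = "closure F"
  have F0: "0 \<in> F" by (rule face_zero[OF pc fF])
  obtain z0 where z0: "z0 \<in> F" "z0 \<noteq> 0"
    using F(1) F0 unfolding nontrivial_face_def by blast
  have CK: "?C \<subseteq> K" using FK Kcl by (rule closure_minimal)
  have Cfr: "?C \<subseteq> frontier K"
    by (rule closure_minimal[OF nontrivial_face_frontier[OF pc F(1)] frontier_closed])
  have cone: "is_cone ?C"
    unfolding is_cone_def
  proof (intro conjI allI impI ballI)
    show "?C \<noteq> {}" using F0 closure_subset by blast
    fix r :: real and x assume r: "r > 0" and x: "x \<in> ?C"
    have "(\<lambda>x. r *\<^sub>R x) ` ?C \<subseteq> ?C"
    proof (rule image_closure_subset)
      show "continuous_on (closure F) (\<lambda>x. r *\<^sub>R x)" by (intro continuous_intros)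
      show "(\<lambda>x. r *\<^sub>R x) ` F \<subseteq> ?C" using fF r closure_subset unfolding face_def is_cone_def by blast
    qed simp
    thus "r *\<^sub>R x \<in> ?C" using x by blast
  qed
  have cvx: "convex ?C" using fF unfolding face_def by (intro convex_closure) auto
  have pt: "x = 0" if "x \<in> ?C" "-x \<in> ?C" for x
    using pc_pointed[OF pc] that CK by blast
  have inv: "?B *v x \<in> ?C" if "x \<in> ?C" for x
  proof -
    have "(\<lambda>x. ?B *v x) ` ?C \<subseteq> ?C"
    proof (rule image_closure_subset)
      show "continuous_on (closure F) (\<lambda>x. ?B *v x)"
        by (rule linear_continuous_on[OF matrix_vector_mul_bounded_linear])
      show "(\<lambda>x. ?B *v x) ` F \<subseteq> ?C" using F(2) closure_subset by blast
    qed simp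
    thus ?thesis using that by blast
  qed
  obtain x \<rho> where x: "x \<in> ?C" "x \<noteq> 0" "?B *v x = \<rho> *\<^sub>R x"
    using pf_cone[OF closed_closure cvx cone pt _ _ inv, of z0] z0 closure_subset by blast
  have "x \<in> frontier K" using x(1) Cfr by blast
  hence ne: "\<not> (\<exists>\<mu>. A *v x = \<mu> *\<^sub>R x)" using i x(2) by blast
  have "t \<noteq> 0" using t(1) by simp
  from spectral[OF q x(2) x(3) this ne] show ?thesis by auto
qed

lemma imp_i_ii:
  fixes K :: "(real^'n) set" and A :: "real^'n^'n"
  assumes pc: "proper_cone K" and en: "exp_K_nonneg K A"
    and i: "\<not> (\<exists>x \<mu>. x \<in> frontier K \<and> x \<noteq> 0 \<and> A *v x = \<mu> *\<^sub>R x)"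
  shows "discrete {t::real. t \<ge> 0 \<and> \<not> K_irreducible K (mexp (t *\<^sub>R A))}"
proof -
  obtain q :: "real poly" where q: "q \<noteq> 0" "(\<Sum>i\<le>degree q. coeff q i *\<^sub>R matpow A i) = 0"
    using exists_annihilating by blast
  let ?R = "{\<nu>. poly (map_poly complex_of_real q) \<nu> = 0}"
  have Rfin: "finite ?R" by (rule poly_roots_finite[OF map_poly_of_real_nz[OF q(1)]])
  let ?T = "{t::real. t \<ge> 0 \<and> \<not> K_irreducible K (mexp (t *\<^sub>R A))}"
  have fin: "finite (?T \<inter> {..Y})" for Y
  proof -
    have "?T \<inter> {..Y} \<subseteq> insert 0 {c::real. 0 < c \<and> c \<le> Y \<and> (\<exists>\<nu>\<in>?R. \<exists>\<nu>'\<in>?R. \<nu> \<noteq> \<nu>' \<and> exp (complex_of_real c * (\<nu> - \<nu>')) = 1)}"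
    proof
      fix t assume t: "t \<in> ?T \<inter> {..Y}"
      show "t \<in> insert 0 {c::real. 0 < c \<and> c \<le> Y \<and> (\<exists>\<nu>\<in>?R. \<exists>\<nu>'\<in>?R. \<nu> \<noteq> \<nu>' \<and> exp (complex_of_real c * (\<nu> - \<nu>')) = 1)}"
      proof (cases "t = 0")
        case False
        hence "t > 0" using t by auto
        with key_exc[OF pc en i q this] t show ?thesis by auto
      qed simp
    qed
    moreover have "finite (insert 0 {c::real. 0 < c \<and> c \<le> Y \<and> (\<exists>\<nu>\<in>?R. \<exists>\<nu>'\<in>?R. \<nu> \<noteq> \<nu>' \<and> exp (complex_of_real c * (\<nu> - \<nu>')) = 1)})"
      using exc_finite[OF Rfin] by blast
    ultimately show ?thesis by (rule finite_subset)
  qed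
  show ?thesis
  proof (rule discreteI)
    fix t assume t: "t \<in> ?T"
    obtain d where d: "d > 0" "\<forall>y\<in>?T \<inter> {..t+1}. y \<noteq> t \<longrightarrow> d \<le> dist t y"
      using finite_set_avoid[OF fin[of "t+1"], of t] by blast
    show "t isolated_in ?T"
      unfolding isolated_in_dist_Ex_iff
    proof (intro conjI exI[of _ "min d 1"] ballI impI)
      show "t \<in> ?T" by fact
      show "0 < min d 1" using d by simp
      fix y assume y: "y \<in> ?T" "dist t y < min d 1"
      hence "y \<le> t + 1" by (simp add: dist_real_def abs_less_iff)
      hence "y \<in> ?T \<inter> {..t+1}" using y(1) by simp
      with y(2) d show "y = t" by force
    qed
  qed
qed

lemma imp_ii_iii:
  fixes K :: "(real^'n) set" and A :: "real^'n^'n"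
  assumes "discrete {t::real. t \<ge> 0 \<and> \<not> K_irreducible K (mexp (t *\<^sub>R A))}"
  shows "\<exists>t>0. K_irreducible K (mexp (t *\<^sub>R A))"
proof (rule ccontr)
  let ?T = "{t::real. t \<ge> 0 \<and> \<not> K_irreducible K (mexp (t *\<^sub>R A))}"
  assume "\<not> ?thesis"
  hence sub: "t \<in> ?T" if "t > 0" for t using that by auto
  have "1 isolated_in ?T" using assms sub[of 1] by (simp add: discrete_def)
  then obtain e where e: "e > 0" "\<forall>y\<in>?T. dist 1 y < e \<longrightarrow> y = 1"
    unfolding isolated_in_dist_Ex_iff by blast
  have "1 + e/2 \<in> ?T" using sub e(1) by (smt (verit) half_gt_zero)
  moreover have "dist 1 (1 + e/2) < e" using e(1) by (simp add: dist_real_def)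
  ultimately have "1 + e/2 = 1" using e(2) by blast
  thus False using e(1) by simp
qed

lemma imp_iii_iv:
  fixes K :: "(real^'n) set" and A :: "real^'n^'n"
  assumes pc: "proper_cone K" and iii: "\<exists>t>0. K_irreducible K (mexp (t *\<^sub>R A))"
  shows "\<not> (\<exists>F. nontrivial_face K F \<and> (\<forall>x\<in>span F. A *v x \<in> span F))"
proof
  assume "\<exists>F. nontrivial_face K F \<and> (\<forall>x\<in>span F. A *v x \<in> span F)"
  then obtain F where F: "nontrivial_face K F" "\<And>x. x \<in> span F \<Longrightarrow> A *v x \<in> span F" by blast
  obtain t where t: "t > 0" "K_irreducible K (mexp (t *\<^sub>R A))" using iii by blast
  have fF: "face K F" using F(1) unfolding nontrivial_face_def by auto
  have "mexp (t *\<^sub>R A) *v x \<in> F" if x: "x \<in> F" for x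
  proof (rule face_span_inter[OF pc fF])
    show "mexp (t *\<^sub>R A) *v x \<in> K" using t(2) x fF unfolding K_irreducible_def cone_preserving_def face_def by blast
    show "mexp (t *\<^sub>R A) *v x \<in> span F"
      by (rule mexp_subspace[OF subspace_span F(2) span_base[OF x]])
  qed
  thus False using t(2) F(1) unfolding K_irreducible_def by blast
qed


lemma imp_iv_i:
  fixes K :: "(real^'n) set" and A :: "real^'n^'n"
  assumes pc: "proper_cone K" and en: "exp_K_nonneg K A"
    and iv: "\<not> (\<exists>F. nontrivial_face K F \<and> (\<forall>x\<in>span F. A *v x \<in> span F))"
  shows "\<not> (\<exists>x \<mu>. x \<in> frontier K \<and> x \<noteq> 0 \<and> A *v x = \<mu> *\<^sub>R x)"
proof
  assume "\<exists>x \<mu>. x \<in> frontier K \<and> x \<noteq> 0 \<and> A *v x = \<mu> *\<^sub>R x"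
  then obtain x \<mu> where x: "x \<in> frontier K" "x \<noteq> 0" "A *v x = \<mu> *\<^sub>R x" by blast
  have Kcl: "closed K" and Kcv: "convex K" and Kint: "interior K \<noteq> {}"
    using pc unfolding proper_cone_def by auto
  have xK: "x \<in> K" using x(1) Kcl by (simp add: frontier_def closure_closed)
  have K0: "0 \<in> K" by (rule pc_zero[OF pc])
  define F where "F = {y \<in> K. \<exists>l\<ge>0. l *\<^sub>R x - y \<in> K}"
  have FK: "F \<subseteq> K" unfolding F_def by auto
  have xF: "x \<in> F" unfolding F_def using xK K0 by (intro CollectI conjI exI[of _ 1]) auto
  have F0: "0 \<in> F" unfolding F_def using K0 by (intro CollectI conjI exI[of _ 0]) auto
  have face: "face K F"
    unfolding face_def
  proof (intro conjI allI impI)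
    show "is_cone F" unfolding is_cone_def
    proof (intro conjI allI impI ballI)
      show "F \<noteq> {}" using F0 by auto
      fix r :: real and y assume r: "r > 0" and y: "y \<in> F"
      then obtain l where l: "l \<ge> 0" "l *\<^sub>R x - y \<in> K" "y \<in> K" unfolding F_def by auto
      have "(r * l) *\<^sub>R x - r *\<^sub>R y = r *\<^sub>R (l *\<^sub>R x - y)" by (simp add: algebra_simps)
      hence "(r * l) *\<^sub>R x - r *\<^sub>R y \<in> K" using pc_scale[OF pc, of r] r l by auto
      moreover have "r *\<^sub>R y \<in> K" using pc_scale[OF pc, of r] r l by auto
      ultimately show "r *\<^sub>R y \<in> F" unfolding F_def using r l by (intro CollectI conjI exI[of _ "r * l"]) auto
    qed
    show "convex F" unfolding convex_def
    proof (intro allI impI ballI)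
      fix y z :: "real^'n" and u v :: real assume y: "y \<in> F" and z: "z \<in> F" and uv: "0 \<le> u" "0 \<le> v" "u + v = 1"
      obtain l1 where l1: "l1 \<ge> 0" "l1 *\<^sub>R x - y \<in> K" "y \<in> K" using y unfolding F_def by auto
      obtain l2 where l2: "l2 \<ge> 0" "l2 *\<^sub>R x - z \<in> K" "z \<in> K" using z unfolding F_def by auto
      have "u *\<^sub>R y + v *\<^sub>R z \<in> K" using Kcv l1 l2 uv by (simp add: convexD)
      moreover have "(u * l1 + v * l2) *\<^sub>R x - (u *\<^sub>R y + v *\<^sub>R z) = u *\<^sub>R (l1 *\<^sub>R x - y) + v *\<^sub>R (l2 *\<^sub>R x - z)"
        by (simp add: algebra_simps)
      hence "(u * l1 + v * l2) *\<^sub>R x - (u *\<^sub>R y + v *\<^sub>R z) \<in> K" using Kcv l1 l2 uv by (simp add: convexD)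
      ultimately show "u *\<^sub>R y + v *\<^sub>R z \<in> F" unfolding F_def using uv l1 l2
        by (intro CollectI conjI exI[of _ "u * l1 + v * l2"]) auto
    qed
    show "F \<subseteq> K" by (rule FK)
    fix y z assume H: "y \<in> F \<and> y - z \<in> K \<and> z - 0 \<in> K"
    then obtain l where l: "l \<ge> 0" "l *\<^sub>R x - y \<in> K" unfolding F_def by auto
    have "l *\<^sub>R x - z = (l *\<^sub>R x - y) + (y - z)" by simp
    hence "l *\<^sub>R x - z \<in> K" using pc_add[OF pc l(2)] H by metis
    thus "z \<in> F" unfolding F_def using H l by auto
  qed
  have FneK: "F \<noteq> K"
  proof
    assume FK': "F = K"
    obtain z where z: "z \<in> interior K" using Kint by blast
    hence "z \<in> F" using FK' interior_subset by blast
    then obtain l where l: "l \<ge> 0" "l *\<^sub>R x - z \<in> K" unfolding F_def by auto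
    define l' where "l' = l + 1"
    have l': "l' > 0" "l' *\<^sub>R x - z \<in> K"
    proof -
      show "l' > 0" using l by (simp add: l'_def)
      have "l' *\<^sub>R x - z = (l *\<^sub>R x - z) + x" by (simp add: l'_def algebra_simps)
      thus "l' *\<^sub>R x - z \<in> K" using pc_add[OF pc l(2) xK] by metis
    qed
    obtain e where e: "e > 0" "ball z e \<subseteq> K" using z mem_interior by blast
    have "ball x (e / l') \<subseteq> K"
    proof
      fix w assume w: "w \<in> ball x (e / l')"
      have "dist (l' *\<^sub>R w - (l' *\<^sub>R x - z)) z = l' * dist w x"
        using l'(1) by (simp add: dist_norm algebra_simps flip: scaleR_diff_right)
      also have "\<dots> < e" using w l'(1) by (simp add: dist_commute field_simps)
      finally have "l' *\<^sub>R w - (l' *\<^sub>R x - z) \<in> K" using e(2) by (auto simp: dist_commute)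
      hence "l' *\<^sub>R w \<in> K" using pc_add[OF pc _ l'(2)] by fastforce
      hence "(1 / l') *\<^sub>R (l' *\<^sub>R w) \<in> K" using pc_scale[OF pc, of "1/l'" "l' *\<^sub>R w"] l'(1) by simp
      thus "w \<in> K" using l'(1) by simp
    qed
    hence "x \<in> interior K" using e(1) l'(1) mem_interior by (metis divide_pos_pos)
    thus False using x(1) by (simp add: frontier_def)
  qed
  have ntf: "nontrivial_face K F" unfolding nontrivial_face_def using face FneK xF x(2) by auto
  have AF: "A *v y \<in> span F" if y: "y \<in> F" for y
  proof -
    obtain l where l: "l \<ge> 0" "l *\<^sub>R x - y \<in> K" "y \<in> K" using y unfolding F_def by auto
    have Et: "mexp (t *\<^sub>R A) *v y \<in> F" if t: "t > 0" for t
    proof -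
      let ?E = "mexp (t *\<^sub>R A)"
      have cp: "\<And>v. v \<in> K \<Longrightarrow> ?E *v v \<in> K" using en t unfolding exp_K_nonneg_def cone_preserving_def by auto
      have "?E *v (l *\<^sub>R x - y) = (l * exp (t * \<mu>)) *\<^sub>R x - ?E *v y"
        by (simp add: matrix_vector_mult_diff_distrib matrix_vector_mult_scaleR mexp_eigen[OF x(3)])
      hence "(l * exp (t * \<mu>)) *\<^sub>R x - ?E *v y \<in> K" using cp[OF l(2)] by simp
      moreover have "?E *v y \<in> K" using cp[OF l(3)] .
      ultimately show ?thesis unfolding F_def using l(1) by (intro CollectI conjI exI[of _ "l * exp (t * \<mu>)"]) auto
    qed
    have ev: "\<forall>\<^sub>F t in at_right 0. (1 / t) *\<^sub>R (mexp (t *\<^sub>R A) *v y - y) \<in> span F"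
      unfolding eventually_at_right_field
    proof (intro exI[of _ 1] conjI allI impI)
      fix t :: real assume t: "0 < t" "t < 1"
      have "mexp (t *\<^sub>R A) *v y - y \<in> span F" using span_base[OF Et[OF t(1)]] span_base[OF y] by (rule span_diff)
      thus "(1 / t) *\<^sub>R (mexp (t *\<^sub>R A) *v y - y) \<in> span F" by (rule span_scale)
    qed simp
    show ?thesis
      by (rule Lim_in_closed_set[OF closed_subspace[OF subspace_span] ev trivial_limit_at_right_real mexp_deriv0])
  qed
  have "\<forall>z\<in>span F. A *v z \<in> span F"
  proof
    fix z assume z: "z \<in> span F"
    show "A *v z \<in> span F"
    proof (rule span_induct[OF z, where P = "\<lambda>z. A *v z \<in> span F"])
      show "subspace {z. A *v z \<in> span F}"
        by (auto simp: subspace_def matrix_vector_right_distrib matrix_vector_mult_scaleR intro: span_add span_scale span_zero)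
      show "\<And>x. x \<in> F \<Longrightarrow> A *v x \<in> span F" by (rule AF)
    qed
  qed
  thus False using iv ntf by blast
qed

theorem mainTheorem1:
  fixes K :: "(real^'n) set" and A :: "real^'n^'n"
  assumes "proper_cone K"
    and "exp_K_nonneg K A"
  shows "((\<not> (\<exists>x \<mu>. x \<in> frontier K \<and> x \<noteq> 0 \<and> A *v x = \<mu> *\<^sub>R x))
            \<longleftrightarrow> discrete {t::real. t \<ge> 0 \<and> \<not> K_irreducible K (mexp (t *\<^sub>R A))})
       \<and> (discrete {t::real. t \<ge> 0 \<and> \<not> K_irreducible K (mexp (t *\<^sub>R A))}
            \<longleftrightarrow> (\<exists>t>0. K_irreducible K (mexp (t *\<^sub>R A))))
       \<and> ((\<exists>t>0. K_irreducible K (mexp (t *\<^sub>R A)))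
            \<longleftrightarrow> \<not> (\<exists>F. nontrivial_face K F \<and> (\<forall>x\<in>span F. A *v x \<in> span F)))"
  using imp_i_ii[OF assms] imp_ii_iii[of K A] imp_iii_iv[OF assms(1), of A] imp_iv_i[OF assms]
  by blast

end
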